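(* Let $Z_1,\dots,Z_n$ be independent real-valued sub-Gaussian random variables with parameter $\sigma^2$, let $\alpha\in(0,1]$, and fix $p_0\in(0,\frac12]$. Then there is an event $\mathcal{E}^{\mathrm{ord}}_{p_0}$ with $\mathbb{P}[\mathcal{E}^{\mathrm{ord}}_{p_0}]\ge 1-2e^{-0.3n}$ on which, for all $p\in[p_0,\frac12]$ and all sub-collections $V\subseteq\{Z_1,\dots,Z_n\}$ with $|V|\ge\max\{n\alpha,\,2/p_0\}$, $$-\sigma\sqrt{\tfrac{4}{p_0}\big(\tfrac1\alpha+1\big)}\ \le\ V^{(\lceil(1-p)|V|\rceil)}\ \le\ V^{(\lfloor p|V|\rfloor)}\ \le\ \sigma\sqrt{\tfrac{4}{p_0}\big(\tfrac1\alpha+1\big)}.$$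
   Context: A real random variable $Z$ is sub-Gaussian with parameter $\sigma^2$ if $\mathbb{E}[e^{\lambda Z}]\le e^{\lambda^2\sigma^2/2}$ for all $\lambda\in\mathbb{R}$. For a finite multiset of reals $\{v_1,\dots,v_m\}$, its order statistics are $v^{(1)}\ge v^{(2)}\ge\dots\ge v^{(m)}$ (so $v^{(t)}$ is the $t$-th largest). Sub-collections $V$ are indexed by subsets of $[n]$. *)

theory Defs
  imports "HOL-Probability.Probability" "HOL-Library.Multiset"
begin

definition subgaussian :: "'a measure \<Rightarrow> ('a \<Rightarrow> real) \<Rightarrow> real \<Rightarrow> bool" where
  "subgaussian M Z s2 \<longleftrightarrow> Z \<in> borel_measurable M \<and>
     (\<forall>l::real. integrable M (\<lambda>x. exp (l * Z x)) \<and>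
        (\<integral>x. exp (l * Z x) \<partial>M) \<le> exp (l\<^sup>2 * s2 / 2))"

text \<open>Order statistic: the t-th largest element (1-indexed) of a finite multiset of reals.\<close>
definition ord_stat :: "real multiset \<Rightarrow> nat \<Rightarrow> real" where
  "ord_stat V t = rev (sorted_list_of_multiset V) ! (t - 1)"

end

theory Submission
  imports Defs
begin


lemma sorted_facts:
  fixes W :: "real multiset"
  shows "sorted (sorted_list_of_multiset W)" "length (sorted_list_of_multiset W) = size W"
    "size (filter_mset P W) = length (filter P (sorted_list_of_multiset W))"
proof -
  show "sorted (sorted_list_of_multiset W)" by simp
  show "length (sorted_list_of_multiset W) = size W"
    by (metis mset_sorted_list_of_multiset size_mset)
  show "size (filter_mset P W) = length (filter P (sorted_list_of_multiset W))"
    by (metis mset_filter mset_sorted_list_of_multiset size_mset)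
qed

lemma ord_stat_nth:
  fixes W :: "real multiset"
  assumes "1 \<le> t" "t \<le> size W"
  shows "ord_stat W t = sorted_list_of_multiset W ! (size W - t)"
  using assms unfolding ord_stat_def
  by (simp add: rev_nth sorted_facts(2) Suc_diff_le)

lemma ord_stat_upper:
  fixes W :: "real multiset"
  assumes "1 \<le> t" "t \<le> size W" "size (filter_mset (\<lambda>x. B < x) W) < t"
  shows "ord_stat W t \<le> B"
proof (rule ccontr)
  define xs where "xs = sorted_list_of_multiset W"
  define m where "m = size W"
  have s: "sorted xs" "length xs = m" using sorted_facts xs_def m_def by auto
  assume "\<not> ord_stat W t \<le> B"
  then have b: "B < xs ! (m - t)" using ord_stat_nth[OF assms(1,2)] xs_def m_def by simp
  have "{m - t..<m} \<subseteq> {j. j < length xs \<and> B < xs ! j}"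
  proof
    fix j assume "j \<in> {m - t..<m}"
    then have "xs ! (m - t) \<le> xs ! j" using sorted_nth_mono[OF s(1)] s(2) by auto
    then show "j \<in> {j. j < length xs \<and> B < xs ! j}" using b s(2) \<open>j \<in> _\<close> by auto
  qed
  then have "card {m - t..<m} \<le> card {j. j < length xs \<and> B < xs ! j}"
    by (intro card_mono) auto
  then have "t \<le> length (filter (\<lambda>x. B < x) xs)"
    using assms(2) m_def by (simp add: length_filter_conv_card)
  then show False using assms(3) sorted_facts(3)[of "\<lambda>x. B < x" W] xs_def by simp
qed

lemma ord_stat_lower:
  fixes W :: "real multiset"
  assumes "1 \<le> t" "t \<le> size W" "size (filter_mset (\<lambda>x. x < - B) W) \<le> size W - t"
  shows "- B \<le> ord_stat W t"
proof (rule ccontr)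
  define xs where "xs = sorted_list_of_multiset W"
  define m where "m = size W"
  have s: "sorted xs" "length xs = m" using sorted_facts xs_def m_def by auto
  assume "\<not> - B \<le> ord_stat W t"
  then have b: "xs ! (m - t) < - B" using ord_stat_nth[OF assms(1,2)] xs_def m_def by simp
  have "{0..m - t} \<subseteq> {j. j < length xs \<and> xs ! j < - B}"
  proof
    fix j assume "j \<in> {0..m - t}"
    then have "xs ! j \<le> xs ! (m - t)" using sorted_nth_mono[OF s(1), of j "m - t"] s(2) assms m_def by auto
    then show "j \<in> {j. j < length xs \<and> xs ! j < - B}" using b s(2) \<open>j \<in> _\<close> assms m_def by auto
  qed
  then have "card {0..m - t} \<le> card {j. j < length xs \<and> xs ! j < - B}"
    by (intro card_mono) auto
  then have "m - t + 1 \<le> length (filter (\<lambda>x. x < - B) xs)"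
    using assms(2) m_def by (simp add: length_filter_conv_card)
  then show False using assms(3) sorted_facts(3)[of "\<lambda>x. x < - B" W] xs_def m_def by simp
qed

lemma ord_stat_mono:
  fixes W :: "real multiset"
  assumes "1 \<le> t1" "t1 \<le> t2" "t2 \<le> size W"
  shows "ord_stat W t2 \<le> ord_stat W t1"
  using ord_stat_nth[of t1 W] ord_stat_nth[of t2 W] assms sorted_nth_mono[OF sorted_facts(1), of "size W - t2" "size W - t1" W]
    sorted_facts(2)[of W] by auto

lemma size_filter_image:
  assumes "finite V"
  shows "size (filter_mset P (image_mset f (mset_set V))) = card {i\<in>V. P (f i)}"
  using assms by (simp add: filter_mset_image_mset)



lemma exp_tail:
  assumes "prob_space M" "subgaussian M Z s2" "l > 0"
  shows "measure M {x\<in>space M. t \<le> Z x} \<le> exp (l^2 * s2/2 - l*t)"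
proof -
  interpret prob_space M by fact
  have [measurable]: "Z \<in> borel_measurable M" and int: "integrable M (\<lambda>x. exp (l * Z x))"
    and bnd: "(\<integral>x. exp (l * Z x) \<partial>M) \<le> exp (l\<^sup>2 * s2 / 2)"
    using assms(2) unfolding subgaussian_def by auto
  have "{x\<in>space M. t \<le> Z x} = {x\<in>space M. exp (l*t) \<le> exp (l * Z x)}"
    using assms(3) by auto
  also have "measure M \<dots> \<le> (\<integral>x. exp (l * Z x) \<partial>M) / exp (l*t)"
    by (rule integral_Markov_inequality_measure[OF int, where A="space M"]) auto
  also have "\<dots> \<le> exp (l\<^sup>2 * s2 / 2) / exp (l*t)"
    by (rule divide_right_mono[OF bnd]) simp
  also have "\<dots> = exp (l^2 * s2/2 - l*t)" by (simp add: exp_diff)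
  finally show ?thesis .
qed

lemma zero_case:
  assumes "prob_space M" "subgaussian M Z 0"
  shows "measure M {x\<in>space M. 0 < Z x} = 0"
proof -
  interpret prob_space M by fact
  have [measurable]: "Z \<in> borel_measurable M" using assms(2) unfolding subgaussian_def by auto
  have each: "measure M {x\<in>space M. 1 / real (Suc j) \<le> Z x} = 0" for j
  proof (rule ccontr)
    define e where "e = 1 / real (Suc j)"
    define a where "a = measure M {x\<in>space M. e \<le> Z x}"
    assume "measure M {x\<in>space M. 1 / real (Suc j) \<le> Z x} \<noteq> 0"
    then have a: "a > 0" unfolding a_def e_def using measure_nonneg[of M "{x\<in>space M. 1 / real (Suc j) \<le> Z x}"] by linarith
    have e: "e > 0" unfolding e_def by simp
    define l where "l = 2 / (a * e)"
    have l: "l > 0" using a e unfolding l_def by simp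
    have "a \<le> exp (- (l * e))" using exp_tail[OF assms l, of e] unfolding a_def by simp
    also have "\<dots> = 1 / exp (l * e)" by (simp add: exp_minus field_simps)
    also have "\<dots> \<le> 1 / (1 + l * e)"
      using l e by (intro divide_left_mono exp_ge_add_one_self) (auto intro!: mult_pos_pos add_pos_pos)
    also have "\<dots> = a / (a + 2)" using a e unfolding l_def by (simp add: field_simps)
    also have "\<dots> < a" using a by (simp add: field_simps add_pos_pos)
    finally show False by simp
  qed
  have eq: "{x\<in>space M. 0 < Z x} = (\<Union>j. {x\<in>space M. 1 / real (Suc j) \<le> Z x})"
  proof (intro equalityI subsetI)
    fix x assume x: "x \<in> {x\<in>space M. 0 < Z x}"
    then obtain n where n: "n > 0" "inverse (real n) < Z x" using ex_inverse_of_nat_less by blast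
    then have "1 / real (Suc (n - 1)) \<le> Z x" by (simp add: inverse_eq_divide)
    then show "x \<in> (\<Union>j. {x\<in>space M. 1 / real (Suc j) \<le> Z x})" using x by blast
  next
    fix x assume "x \<in> (\<Union>j. {x\<in>space M. 1 / real (Suc j) \<le> Z x})"
    then obtain j where "x \<in> space M" "1 / real (Suc j) \<le> Z x" by blast
    moreover have "0 < 1 / real (Suc j)" by simp
    ultimately show "x \<in> {x\<in>space M. 0 < Z x}" using less_le_trans by blast
  qed
  have "(\<Union>j. {x\<in>space M. 1 / real (Suc j) \<le> Z x}) \<in> null_sets M"
    using each by (intro null_sets_UN null_setsI) (auto simp: emeasure_eq_measure)
  then show ?thesis unfolding eq by (simp add: measure_def null_setsD1)
qed

lemma tail_B:
  assumes "prob_space M" "subgaussian M Z (\<sigma>\<^sup>2)" "\<sigma> \<ge> 0" "c \<ge> 0"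
  shows "measure M {x\<in>space M. \<sigma> * sqrt (2*c) < Z x} \<le> exp (-c)"
proof -
  interpret prob_space M by fact
  have [measurable]: "Z \<in> borel_measurable M" using assms(2) unfolding subgaussian_def by auto
  show ?thesis
  proof (cases "\<sigma> = 0")
    case True
    then show ?thesis using zero_case[OF assms(1)] assms(2) by simp
  next
    case False
    then have s: "\<sigma> > 0" using assms(3) by simp
    show ?thesis
    proof (cases "c = 0")
      case True then show ?thesis by simp
    next
      case False
      then have c: "c > 0" using assms(4) by simp
      define t where "t = \<sigma> * sqrt (2*c)"
      define l where "l = t / \<sigma>^2"
      have l: "l > 0" using s c unfolding l_def t_def by simp
      have "measure M {x\<in>space M. t < Z x} \<le> measure M {x\<in>space M. t \<le> Z x}"
        by (intro finite_measure_mono) auto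
      also have "\<dots> \<le> exp (l^2 * \<sigma>\<^sup>2/2 - l*t)" by (rule exp_tail[OF assms(1,2) l])
      also have "l^2 * \<sigma>\<^sup>2/2 - l*t = - c"
        using s c unfolding l_def t_def by (simp add: field_simps power2_eq_square)
      finally show ?thesis unfolding t_def by simp
    qed
  qed
qed

lemma subgaussian_neg:
  assumes "subgaussian M Z s2"
  shows "subgaussian M (\<lambda>x. - Z x) s2"
  unfolding subgaussian_def
proof (intro conjI allI)
  show "(\<lambda>x. - Z x) \<in> borel_measurable M" using assms unfolding subgaussian_def by auto
  fix l :: real
  have "integrable M (\<lambda>x. exp ((-l) * Z x))" "(\<integral>x. exp ((-l) * Z x) \<partial>M) \<le> exp ((-l)\<^sup>2 * s2 / 2)"
    using assms unfolding subgaussian_def by blast+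
  then show "integrable M (\<lambda>x. exp (l * - Z x))" "(\<integral>x. exp (l * - Z x) \<partial>M) \<le> exp (l\<^sup>2 * s2 / 2)"
    by simp_all
qed

lemma count_bound:
  fixes Z :: "nat \<Rightarrow> 'a \<Rightarrow> real"
  assumes "prob_space M" "prob_space.indep_vars M (\<lambda>_. borel) Z {..<n}"
    and P: "{y. P y} \<in> sets borel"
    and r: "\<And>i. i < n \<Longrightarrow> measure M {x\<in>space M. P (Z i x)} \<le> r"
    and k: "k \<ge> 1"
  shows "\<exists>U\<in>sets M. {x\<in>space M. k \<le> card {i\<in>{..<n}. P (Z i x)}} \<subseteq> U \<and> measure M U \<le> real (n choose k) * r ^ k"
proof -
  interpret prob_space M by fact
  define F where "F i = {x\<in>space M. P (Z i x)}" for i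
  have ind: "indep_events F {..<n}"
    unfolding F_def using assms(2) P by (intro indep_eventsI_indep_vars[where N="\<lambda>_. borel"]) auto
  then have Fs: "F i \<in> sets M" if "i < n" for i using that by (auto simp: indep_events_def)
  define SS where "SS = {S. S \<subseteq> {..<n} \<and> card S = k}"
  have finSS: "finite SS" unfolding SS_def by auto
  have SSne: "S \<noteq> {}" "finite S" "S \<subseteq> {..<n}" "card S = k" if "S \<in> SS" for S
    using that k unfolding SS_def by (auto intro: finite_subset)
  have INTs: "(\<Inter>i\<in>S. F i) \<in> sets M" if "S \<in> SS" for S
    using SSne[OF that] Fs by (intro sets.finite_INT) auto
  have sub: "{x\<in>space M. k \<le> card {i\<in>{..<n}. P (Z i x)}} \<subseteq> (\<Union>S\<in>SS. \<Inter>i\<in>S. F i)"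
  proof
    fix x assume x: "x \<in> {x\<in>space M. k \<le> card {i\<in>{..<n}. P (Z i x)}}"
    then have "k \<le> card {i\<in>{..<n}. P (Z i x)}" by simp
    then obtain S where S: "S \<subseteq> {i\<in>{..<n}. P (Z i x)}" "card S = k"
      by (rule obtain_subset_with_card_n)
    then have "S \<in> SS" unfolding SS_def by auto
    moreover have "x \<in> (\<Inter>i\<in>S. F i)" using S x unfolding F_def by auto
    ultimately show "x \<in> (\<Union>S\<in>SS. \<Inter>i\<in>S. F i)" by blast
  qed
  have "measure M (\<Union>S\<in>SS. \<Inter>i\<in>S. F i) \<le> (\<Sum>S\<in>SS. measure M (\<Inter>i\<in>S. F i))"
    using finSS INTs by (intro measure_UNION_le) auto
  also have "\<dots> \<le> (\<Sum>S\<in>SS. r ^ k)"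
  proof (intro sum_mono)
    fix S assume S: "S \<in> SS"
    have "measure M (\<Inter>i\<in>S. F i) = (\<Prod>i\<in>S. measure M (F i))"
      using ind SSne[OF S] unfolding indep_events_def by auto
    also have "\<dots> \<le> (\<Prod>i\<in>S. r)"
      using SSne[OF S] r unfolding F_def by (intro prod_mono) auto
    also have "\<dots> = r ^ k" using SSne[OF S] by simp
    finally show "measure M (\<Inter>i\<in>S. F i) \<le> r ^ k" .
  qed
  also have "\<dots> = real (n choose k) * r ^ k"
    unfolding SS_def using n_subsets[of "{..<n}" k] by simp
  finally have m: "measure M (\<Union>S\<in>SS. \<Inter>i\<in>S. F i) \<le> real (n choose k) * r ^ k" .
  have U: "(\<Union>S\<in>SS. \<Inter>i\<in>S. F i) \<in> sets M" using sets.finite_UN[OF finSS INTs] by simp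
  show ?thesis
  proof (rule bexI[where x="(\<Union>S\<in>SS. \<Inter>i\<in>S. F i)"])
    show "{x\<in>space M. k \<le> card {i\<in>{..<n}. P (Z i x)}} \<subseteq> (\<Union>S\<in>SS. \<Inter>i\<in>S. F i) \<and> measure M (\<Union>S\<in>SS. \<Inter>i\<in>S. F i) \<le> real (n choose k) * r ^ k"
      using sub m by (rule conjI)
  qed (rule U)
qed

lemma two_le_exp: "2 \<le> exp (7/10::real)"
proof -
  have e: "exp (7/10::real) = exp (1/10) ^ 7" using exp_of_nat_mult[of 7 "1/10::real"] by simp
  have q: "(221/200::real) \<le> exp (1/10)" using exp_lower_Taylor_quadratic[of "1/10::real"] by (simp add: power2_eq_square)
  have h1: "(221/200::real) ^ 7 \<le> exp (1/10) ^ 7" by (rule power_mono[OF q]) simp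
  have h2: "(2::real) \<le> (221/200) ^ 7" by (simp add: power_divide)
  show ?thesis unfolding e by (rule order_trans[OF h2 h1])
qed

lemma final_bound:
  fixes n k :: nat and c :: real
  assumes "c * real k \<ge> real n"
  shows "real (n choose k) * exp (-c) ^ k \<le> exp (- (3/10) * real n)"
proof -
  have "real (n choose k) \<le> 2 ^ n"
    using binomial_le_pow2[of n k] by (metis of_nat_le_iff of_nat_numeral of_nat_power)
  also have "(2::real) ^ n \<le> exp (7/10) ^ n" using two_le_exp by (intro power_mono) auto
  also have "\<dots> = exp (7/10 * real n)" using exp_of_nat_mult[of n "7/10::real"] by (simp add: mult.commute)
  finally have a: "real (n choose k) \<le> exp (7/10 * real n)" .
  have "exp (-c) ^ k = exp (- (c * real k))" using exp_of_nat_mult[of k "-c"] by (simp add: mult.commute)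
  also have "\<dots> \<le> exp (- real n)" using assms by simp
  finally have b: "exp (-c) ^ k \<le> exp (- real n)" .
  have "real (n choose k) * exp (-c) ^ k \<le> exp (7/10 * real n) * exp (- real n)"
    using a b by (intro mult_mono) auto
  also have "\<dots> = exp (- (3/10) * real n)" by (simp flip: exp_add)
  finally show ?thesis .
qed



theorem mainTheorem3:
  fixes M :: "'a measure" and Z :: "nat \<Rightarrow> 'a \<Rightarrow> real" and n :: nat
    and \<sigma> \<alpha> p0 :: real
  assumes "prob_space M"
    and "prob_space.indep_vars M (\<lambda>_. borel) Z {..<n}"
    and "\<And>i. i < n \<Longrightarrow> subgaussian M (Z i) (\<sigma>\<^sup>2)"
    and "\<sigma> \<ge> 0"
    and "0 < \<alpha>" and "\<alpha> \<le> 1"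
    and "0 < p0" and "p0 \<le> 1/2"
  shows "\<exists>E \<in> sets M. measure M E \<ge> 1 - 2 * exp (- (3/10) * real n) \<and>
    (\<forall>\<omega>\<in>E. \<forall>p. p0 \<le> p \<and> p \<le> 1/2 \<longrightarrow>
       (\<forall>V \<subseteq> {..<n}. real (card V) \<ge> max (real n * \<alpha>) (2 / p0) \<longrightarrow>
          (let W = image_mset (\<lambda>i. Z i \<omega>) (mset_set V);
               m = real (card V);
               B = \<sigma> * sqrt (4 / p0 * (1 / \<alpha> + 1))
           in - B \<le> ord_stat W (nat \<lceil>(1 - p) * m\<rceil>)
              \<and> ord_stat W (nat \<lceil>(1 - p) * m\<rceil>) \<le> ord_stat W (nat \<lfloor>p * m\<rfloor>)
              \<and> ord_stat W (nat \<lfloor>p * m\<rfloor>) \<le> B)))"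
proof -
  interpret prob_space M by fact
  note sg = assms(3)
  show ?thesis
  proof (cases "n = 0")
    case True
    show ?thesis
    proof (rule bexI[OF _ sets.top], intro conjI ballI allI impI)
      show "1 - 2 * exp (- (3/10) * real n) \<le> measure M (space M)"
        using True by (simp add: prob_space)
      fix \<omega> p V
      assume V: "V \<subseteq> {..<n}" and Vc: "max (real n * \<alpha>) (2 / p0) \<le> real (card V)"
      have "card V = 0" using V True by simp
      moreover have "2 / p0 > 0" using assms(7) by simp
      ultimately have False using Vc by linarith
      then show "let W = image_mset (\<lambda>i. Z i \<omega>) (mset_set V);
               m = real (card V);
               B = \<sigma> * sqrt (4 / p0 * (1 / \<alpha> + 1))
           in - B \<le> ord_stat W (nat \<lceil>(1 - p) * m\<rceil>)
              \<and> ord_stat W (nat \<lceil>(1 - p) * m\<rceil>) \<le> ord_stat W (nat \<lfloor>p * m\<rfloor>)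
              \<and> ord_stat W (nat \<lfloor>p * m\<rfloor>) \<le> B" ..
    qed
  next
    case False
    then have npos: "n > 0" by simp
    define c where "c = 2 / p0 * (1 / \<alpha> + 1)"
    define B where "B = \<sigma> * sqrt (4 / p0 * (1 / \<alpha> + 1))"
    have c0: "c \<ge> 0" unfolding c_def using assms(5,7) by simp
    have BB: "B = \<sigma> * sqrt (2 * c)" unfolding B_def c_def by (simp add: field_simps)
    define x where "x = p0 * real n * \<alpha>"
    have xpos: "x > 0" unfolding x_def using assms(5,7) npos by simp
    define k where "k = nat \<lceil>x / 2\<rceil>"
    have c1: "\<lceil>x / 2\<rceil> \<ge> 1"
    proof -
      have "\<not> \<lceil>x / 2\<rceil> \<le> 0" using xpos by (simp add: ceiling_le_zero)
      then show ?thesis by linarith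
    qed
    have k1: "k \<ge> 1" unfolding k_def using c1 by (simp add: le_nat_iff)
    have kr: "real k = real_of_int \<lceil>x / 2\<rceil>" unfolding k_def using c1 by simp
    have kx: "real k \<ge> x / 2" unfolding kr by (rule le_of_int_ceiling)
    have ck: "c * real k \<ge> real n"
    proof -
      have "c * real k \<ge> c * (x / 2)" using kx c0 by (intro mult_left_mono) auto
      also have "c * (x / 2) = real n * (1 + \<alpha>)" unfolding c_def x_def using assms(5,7)
        by (simp add: field_simps)
      also have "\<dots> \<ge> real n" using assms(5) by (simp add: algebra_simps)
      finally show ?thesis by simp
    qed
    have up: "measure M {x\<in>space M. B < Z i x} \<le> exp (-c)" if "i < n" for i
      unfolding BB by (rule tail_B[OF assms(1) sg[OF that] assms(4) c0])
    have lo: "measure M {x\<in>space M. Z i x < - B} \<le> exp (-c)" if "i < n" for i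
    proof -
      have "{x\<in>space M. Z i x < - B} = {x\<in>space M. B < - Z i x}" by auto
      then show ?thesis using tail_B[OF assms(1) subgaussian_neg[OF sg[OF that]] assms(4) c0] unfolding BB
        by simp
    qed
    obtain U1 where U1: "U1 \<in> sets M" "{x\<in>space M. k \<le> card {i\<in>{..<n}. B < Z i x}} \<subseteq> U1"
      "measure M U1 \<le> real (n choose k) * exp (-c) ^ k"
      using count_bound[OF assms(1,2), of "\<lambda>y. B < y" "exp (-c)" k] up k1 by auto
    obtain U2 where U2: "U2 \<in> sets M" "{x\<in>space M. k \<le> card {i\<in>{..<n}. Z i x < - B}} \<subseteq> U2"
      "measure M U2 \<le> real (n choose k) * exp (-c) ^ k"
      using count_bound[OF assms(1,2), of "\<lambda>y. y < - B" "exp (-c)" k] lo k1 by auto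
    have fb: "real (n choose k) * exp (-c) ^ k \<le> exp (- (3/10) * real n)" by (rule final_bound[OF ck])
    define E where "E = space M - (U1 \<union> U2)"
    have Es: "E \<in> sets M" unfolding E_def using U1(1) U2(1) by auto
    have "measure M E = 1 - measure M (U1 \<union> U2)" unfolding E_def
      using U1(1) U2(1) by (simp add: prob_compl)
    moreover have "measure M (U1 \<union> U2) \<le> measure M U1 + measure M U2"
      using U1(1) U2(1) by (rule measure_Un_le)
    ultimately have Em: "measure M E \<ge> 1 - 2 * exp (- (3/10) * real n)"
      using U1(3) U2(3) fb by linarith
    show ?thesis
    proof (rule bexI[OF _ Es], intro conjI Em ballI allI impI)
      fix \<omega> p V
      assume \<omega>: "\<omega> \<in> E" and p: "p0 \<le> p \<and> p \<le> 1/2" and V: "V \<subseteq> {..<n}"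
        and Vc: "max (real n * \<alpha>) (2 / p0) \<le> real (card V)"
      have \<omega>s: "\<omega> \<in> space M" using \<omega> unfolding E_def by auto
      have cu: "card {i\<in>{..<n}. B < Z i \<omega>} < k" using \<omega> \<omega>s U1(2) unfolding E_def by auto
      have cl: "card {i\<in>{..<n}. Z i \<omega> < - B} < k" using \<omega> \<omega>s U2(2) unfolding E_def by auto
      have finV: "finite V" using V finite_subset by blast
      define W where "W = image_mset (\<lambda>i. Z i \<omega>) (mset_set V)"
      define m where "m = real (card V)"
      have sW: "size W = card V" unfolding W_def by simp
      have pm: "p * m \<ge> x" "p * m \<ge> 2"
      proof -
        have a1: "p * m \<ge> p0 * m" using p Vc unfolding m_def by (intro mult_right_mono) auto
        have a2: "p0 * m \<ge> p0 * (real n * \<alpha>)" using Vc assms(7) unfolding m_def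
          by (intro mult_left_mono) auto
        have a3: "p0 * m \<ge> p0 * (2 / p0)" using Vc assms(7) unfolding m_def
          by (intro mult_left_mono) auto
        have a4: "p0 * (2 / p0) = 2" using assms(7) by simp
        have a5: "x = p0 * (real n * \<alpha>)" unfolding x_def by simp
        show "p * m \<ge> x" "p * m \<ge> 2" using a1 a2 a3 a4 a5 by linarith+
      qed
      define fl where "fl = \<lfloor>p * m\<rfloor>"
      have kfl: "int k \<le> fl"
      proof -
        have "real_of_int \<lceil>x / 2\<rceil> \<le> x / 2 + 1" by (rule of_int_ceiling_le_add_one)
        then have "real_of_int \<lceil>x / 2\<rceil> \<le> p * m"
        proof (cases "x \<ge> 2")
          case True then show ?thesis using pm \<open>real_of_int \<lceil>x / 2\<rceil> \<le> x / 2 + 1\<close> by linarith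
        next
          case False
          then have "\<lceil>x / 2\<rceil> \<le> 1" by (simp add: ceiling_le_iff)
          then show ?thesis using pm by linarith
        qed
        then have "\<lceil>x / 2\<rceil> \<le> fl" unfolding fl_def by (simp add: le_floor_iff)
        then show ?thesis unfolding k_def using xpos by simp
      qed
      define t1 where "t1 = nat fl"
      have fl1: "fl \<ge> 1" using kfl k1 by linarith
      have t1: "int t1 = fl" "k \<le> t1" "1 \<le> t1" unfolding t1_def using fl1 kfl by auto
      have flm: "2 * fl \<le> int (card V)"
      proof -
        have "real_of_int fl \<le> p * m" unfolding fl_def by simp
        moreover have "p * m \<le> 1/2 * m" using p unfolding m_def by (intro mult_right_mono) auto
        ultimately have "2 * real_of_int fl \<le> m" by linarith
        then show ?thesis unfolding m_def by linarith
      qed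
      have ceq: "\<lceil>(1 - p) * m\<rceil> = int (card V) - fl"
      proof -
        have "(1 - p) * m = - (p * m) + real_of_int (int (card V))" unfolding m_def by (simp add: algebra_simps)
        then have "\<lceil>(1 - p) * m\<rceil> = \<lceil>- (p * m)\<rceil> + int (card V)" by (simp only: ceiling_add_of_int)
        then show ?thesis unfolding fl_def by (simp add: ceiling_minus)
      qed
      define t2 where "t2 = card V - t1"
      have t2: "nat \<lceil>(1 - p) * m\<rceil> = t2" unfolding t2_def using ceq t1(1) flm by auto
      have t12: "t1 \<le> t2" "t2 \<le> size W" "t1 \<le> size W" unfolding t2_def sW using t1(1) flm by auto
      have fu: "size (filter_mset (\<lambda>y. B < y) W) < t1"
      proof -
        have "size (filter_mset (\<lambda>y. B < y) W) = card {i\<in>V. B < Z i \<omega>}"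
          unfolding W_def using finV by (rule size_filter_image)
        also have "\<dots> \<le> card {i\<in>{..<n}. B < Z i \<omega>}" using V by (intro card_mono) auto
        finally show ?thesis using cu t1 by linarith
      qed
      have fo: "size (filter_mset (\<lambda>y. y < - B) W) \<le> size W - t2"
      proof -
        have "size (filter_mset (\<lambda>y. y < - B) W) = card {i\<in>V. Z i \<omega> < - B}"
          unfolding W_def using finV by (rule size_filter_image)
        also have "\<dots> \<le> card {i\<in>{..<n}. Z i \<omega> < - B}" using V by (intro card_mono) auto
        finally have "size (filter_mset (\<lambda>y. y < - B) W) < t1" using cl t1 by linarith
        moreover have "size W - t2 = t1" unfolding t2_def sW using t12 sW by auto
        ultimately show ?thesis by simp
      qed
      have "- B \<le> ord_stat W t2" by (rule ord_stat_lower) (use t1 t12 fo in auto)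
      moreover have "ord_stat W t2 \<le> ord_stat W t1" by (rule ord_stat_mono) (use t1 t12 in auto)
      moreover have "ord_stat W t1 \<le> B" by (rule ord_stat_upper) (use t1 t12 fu in auto)
      ultimately show "let W = image_mset (\<lambda>i. Z i \<omega>) (mset_set V);
               m = real (card V);
               B = \<sigma> * sqrt (4 / p0 * (1 / \<alpha> + 1))
           in - B \<le> ord_stat W (nat \<lceil>(1 - p) * m\<rceil>)
              \<and> ord_stat W (nat \<lceil>(1 - p) * m\<rceil>) \<le> ord_stat W (nat \<lfloor>p * m\<rfloor>)
              \<and> ord_stat W (nat \<lfloor>p * m\<rfloor>) \<le> B"
        unfolding Let_def W_def[symmetric] m_def[symmetric] B_def[symmetric] t2 fl_def[symmetric] t1_def[symmetric]
        by simp
    qed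
  qed
qed

end
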